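(* Let $X$ be a finite cycle set and let $G(X)$ be its permutation group. Then the action of $G(X)$ on $X$ is not a Frobenius action; that is, $G(X)$ does not act on $X$ as a Frobenius group.
   Context: A cycle set is a set $X$ with a binary operation $\cdot$ such that for every $x\in X$ the map $\sigma(x)\colon X\to X$, $y\mapsto x\cdot y$, is bijective, and $(x\cdot y)\cdot(x\cdot z)=(y\cdot x)\cdot(y\cdot z)$ for all $x,y,z\in X$. The permutation group $G(X)$ is the subgroup of the symmetric group on $X$ generated by all $\sigma(x)$, $x\in X$. A group $G$ acting on a finite set $X$ acts as a Frobenius group if the action is transitive, every element $g\ne 1$ of $G$ fixes at most one point of $X$, and some element $g\neq 1$ fixes a point of $X$. *)

theory Defs
  imports Main "HOL-Library.FuncSet"
begin

definition cycle_set :: "'a set \<Rightarrow> ('a \<Rightarrow> 'a \<Rightarrow> 'a) \<Rightarrow> bool" where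
  "cycle_set X op \<longleftrightarrow>
     (\<forall>x\<in>X. \<forall>y\<in>X. op x y \<in> X) \<and>
     (\<forall>x\<in>X. bij_betw (op x) X X) \<and>
     (\<forall>x\<in>X. \<forall>y\<in>X. \<forall>z\<in>X. op (op x y) (op x z) = op (op y x) (op y z))"

text \<open>The permutation sigma(x) of X, extended by the identity outside X
  (so that permutations of X are represented as functions fixing everything outside X).\<close>
definition sigma :: "'a set \<Rightarrow> ('a \<Rightarrow> 'a \<Rightarrow> 'a) \<Rightarrow> 'a \<Rightarrow> 'a \<Rightarrow> 'a" where
  "sigma X op x = (\<lambda>y. if y \<in> X then op x y else y)"

inductive_set gen_perm_group :: "'a set \<Rightarrow> ('a \<Rightarrow> 'a) set \<Rightarrow> ('a \<Rightarrow> 'a) set"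
  for X :: "'a set" and S :: "('a \<Rightarrow> 'a) set" where
  gen_id: "id \<in> gen_perm_group X S"
| gen_gen: "s \<in> S \<Longrightarrow> s \<in> gen_perm_group X S"
| gen_comp: "g \<in> gen_perm_group X S \<Longrightarrow> h \<in> gen_perm_group X S \<Longrightarrow> g \<circ> h \<in> gen_perm_group X S"
| gen_inv: "g \<in> gen_perm_group X S \<Longrightarrow> inv g \<in> gen_perm_group X S"

definition perm_group_cs :: "'a set \<Rightarrow> ('a \<Rightarrow> 'a \<Rightarrow> 'a) \<Rightarrow> ('a \<Rightarrow> 'a) set" where
  "perm_group_cs X op = gen_perm_group X (sigma X op ` X)"

definition frobenius_action :: "('a \<Rightarrow> 'a) set \<Rightarrow> 'a set \<Rightarrow> bool" where
  "frobenius_action G X \<longleftrightarrow>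
     (\<forall>x\<in>X. \<forall>y\<in>X. \<exists>g\<in>G. g x = y) \<and>
     (\<forall>g\<in>G. g \<noteq> id \<longrightarrow> card {x\<in>X. g x = x} \<le> 1) \<and>
     (\<exists>g\<in>G. g \<noteq> id \<and> (\<exists>x\<in>X. g x = x))"

end

theory Submission
  imports Defs "HOL-Library.Multiset" "HOL-Algebra.Sylow" "HOL-Algebra.Multiplicative_Group"
begin


lemma bij_ext_id:
  assumes "bij_betw f X X"
  shows "bij (\<lambda>y. if y \<in> X then f y else y)"
proof -
  let ?g = "\<lambda>y. if y \<in> X then f y else y"
  have "inj ?g"
  proof (rule injI)
    fix x y assume e: "?g x = ?g y"
    show "x = y"
      using e assms unfolding bij_betw_def inj_on_def
      by (auto split: if_splits)
  qed
  moreover have "surj ?g"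
  proof -
    { fix y
      have "\<exists>x. ?g x = y"
      proof (cases "y \<in> X")
        case True
        have "y \<in> f ` X" using assms True by (simp add: bij_betw_def)
        then obtain x where "x \<in> X" "f x = y" by (auto simp: image_iff)
        then show ?thesis by auto
      next
        case False then show ?thesis by auto
      qed }
    then show ?thesis unfolding surj_def by (metis (no_types, lifting))
  qed
  ultimately show ?thesis by (simp add: bij_def)
qed

abbreviation iv :: "('a \<Rightarrow> 'b) \<Rightarrow> 'b \<Rightarrow> 'a" where "iv \<equiv> Hilbert_Choice.inv"

locale CS =
  fixes X :: "'a set" and op :: "'a \<Rightarrow> 'a \<Rightarrow> 'a"
  assumes finX: "finite X" and csX: "cycle_set X op"
begin

abbreviation GG where "GG \<equiv> perm_group_cs X op"

definition s :: "'a \<Rightarrow> 'a \<Rightarrow> 'a" where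
  "s a = (if a \<in> X then sigma X op a else id)"

lemma closed: "x \<in> X \<Longrightarrow> y \<in> X \<Longrightarrow> op x y \<in> X"
  using csX unfolding cycle_set_def by blast

lemma bijX: "x \<in> X \<Longrightarrow> bij_betw (op x) X X"
  using csX unfolding cycle_set_def by blast

lemma cyc: "x \<in> X \<Longrightarrow> y \<in> X \<Longrightarrow> z \<in> X \<Longrightarrow> op (op x y) (op x z) = op (op y x) (op y z)"
  using csX unfolding cycle_set_def by blast

lemma s_bij: "bij (s a)"
  by (auto simp: s_def sigma_def intro: bij_ext_id bijX)

lemma s_out: "y \<notin> X \<Longrightarrow> s a y = y"
  by (simp add: s_def sigma_def)

lemma s_in: "y \<in> X \<Longrightarrow> s a y \<in> X"
  by (simp add: s_def sigma_def closed)

lemma s_comm: "s (s a b) \<circ> s a = s (s b a) \<circ> s b"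
proof (cases "a \<in> X")
  case aX: True
  show ?thesis
  proof (cases "b \<in> X")
    case bX: True
    have "s a b = op a b" "s b a = op b a" using aX bX by (auto simp: s_def sigma_def)
    moreover have "op a b \<in> X" "op b a \<in> X" using aX bX closed by auto
    ultimately show ?thesis using aX bX
      by (auto simp: s_def sigma_def fun_eq_iff closed cyc)
  next
    case False
    then show ?thesis using aX by (auto simp: s_def sigma_def fun_eq_iff)
  qed
next
  case False
  then show ?thesis by (auto simp: s_def sigma_def fun_eq_iff)
qed

definition f :: "'a \<Rightarrow> ('a \<Rightarrow> 'a) \<Rightarrow> ('a \<Rightarrow> 'a)" where
  "f z g = s (g z) \<circ> g"

lemma f_cfc: "comp_fun_commute f"
proof
  fix y x
  show "f y \<circ> f x = f x \<circ> f y"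
  proof
    fix g
    have "f y (f x g) = s (s (g x) (g y)) \<circ> s (g x) \<circ> g" by (simp add: f_def o_assoc)
    also have "\<dots> = s (s (g y) (g x)) \<circ> s (g y) \<circ> g" using s_comm[of "g x" "g y"] by (simp add: o_assoc)
    also have "\<dots> = f x (f y g)" by (simp add: f_def o_assoc)
    finally show "(f y \<circ> f x) g = (f x \<circ> f y) g" by simp
  qed
qed

interpretation FF: comp_fun_commute f by (rule f_cfc)

definition Phi :: "'a multiset \<Rightarrow> 'a \<Rightarrow> 'a" where
  "Phi M = fold_mset f id M"

lemma Phi_empty[simp]: "Phi {#} = id" by (simp add: Phi_def)

lemma Phi_add: "Phi (add_mset z M) = s (Phi M z) \<circ> Phi M"
  by (simp add: Phi_def f_def)

lemma Phi_single: "Phi {#z#} = s z"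
  by (simp add: Phi_add)

lemma fold_g: "fold_mset f g M = Phi (image_mset g M) \<circ> g"
proof (induction M)
  case empty
  then show ?case by simp
next
  case (add x M)
  have "fold_mset f g (add_mset x M) = f x (fold_mset f g M)" by simp
  also have "\<dots> = f x (Phi (image_mset g M) \<circ> g)" by (simp only: add.IH)
  also have "\<dots> = s (Phi (image_mset g M) (g x)) \<circ> (Phi (image_mset g M) \<circ> g)"
    by (simp only: f_def comp_apply)
  also have "\<dots> = Phi (image_mset g (add_mset x M)) \<circ> g"
    by (simp only: image_mset_add_mset Phi_add o_assoc)
  finally show ?case .
qed

lemma Phi_union: "Phi (M + N) = Phi (image_mset (Phi M) N) \<circ> Phi M"
proof -
  have "Phi (M + N) = fold_mset f (Phi M) N" by (simp add: Phi_def)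
  then show ?thesis by (simp add: fold_g)
qed


lemma sigma_eq_s: "x \<in> X \<Longrightarrow> sigma X op x = s x"
  by (simp add: s_def)

definition good :: "('a \<Rightarrow> 'a) \<Rightarrow> bool" where
  "good g \<longleftrightarrow> bij g \<and> (\<forall>y. y \<notin> X \<longrightarrow> g y = y) \<and> (\<forall>y\<in>X. g y \<in> X)"

lemma s_good: "good (s a)"
  by (simp add: good_def s_bij s_out s_in)

lemma good_comp: "good g \<Longrightarrow> good h \<Longrightarrow> good (g \<circ> h)"
  by (simp add: good_def bij_comp)

lemma good_onto: "good g \<Longrightarrow> g ` X = X"
proof -
  assume g: "good g"
  have "g ` X \<subseteq> X" using g by (auto simp: good_def)
  moreover have "inj_on g X" using g by (auto simp: good_def bij_def intro: inj_on_subset)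
  ultimately show ?thesis using endo_inj_surj finX by blast
qed

lemma good_inv: "good g \<Longrightarrow> good (iv g)"
proof -
  assume g: "good g"
  have b: "bij g" using g by (simp add: good_def)
  have "bij (iv g)" using b by (simp add: bij_imp_bij_inv)
  moreover have "\<forall>y. y \<notin> X \<longrightarrow> iv g y = y"
  proof (intro allI impI)
    fix y assume "y \<notin> X"
    then have "g y = y" using g by (simp add: good_def)
    then show "iv g y = y" using b by (metis bij_is_inj inv_f_f)
  qed
  moreover have "\<forall>y\<in>X. iv g y \<in> X"
  proof
    fix y assume "y \<in> X"
    then obtain z where "z \<in> X" "y = g z" using good_onto[OF g] by blast
    then show "iv g y \<in> X" using b by (simp add: bij_is_inj)
  qed
  ultimately show ?thesis by (simp add: good_def)
qed

lemma GG_good: "g \<in> GG \<Longrightarrow> good g"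
  unfolding perm_group_cs_def
proof (induction rule: gen_perm_group.induct)
  case gen_id
  show ?case unfolding good_def using bij_id by simp
next
  case (gen_gen s')
  then show ?case using s_good sigma_eq_s by auto
next
  case (gen_comp g h)
  then show ?case using good_comp[of g h] by (simp add: comp_def)
next
  case (gen_inv g)
  then show ?case by (simp add: good_inv)
qed

lemma GG_id: "id \<in> GG"
  by (simp add: perm_group_cs_def gen_perm_group.gen_id)

lemma GG_comp: "g \<in> GG \<Longrightarrow> h \<in> GG \<Longrightarrow> g \<circ> h \<in> GG"
  by (simp add: perm_group_cs_def gen_perm_group.gen_comp)

lemma GG_inv: "g \<in> GG \<Longrightarrow> iv g \<in> GG"
  by (simp add: perm_group_cs_def gen_perm_group.gen_inv)

lemma GG_sigma: "x \<in> X \<Longrightarrow> sigma X op x \<in> GG"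
  by (simp add: perm_group_cs_def gen_perm_group.gen_gen)

lemma s_GG: "s a \<in> GG"
  by (cases "a \<in> X") (auto simp: s_def GG_id GG_sigma)

lemma finite_good: "finite {g. good g}"
proof -
  let ?R = "\<lambda>g. restrict g X"
  have "?R ` {g. good g} \<subseteq> X \<rightarrow>\<^sub>E X" by (auto simp: good_def)
  moreover have "finite (X \<rightarrow>\<^sub>E X)" using finX by (simp add: finite_PiE)
  ultimately have "finite (?R ` {g. good g})" by (rule finite_subset)
  moreover have "inj_on ?R {g. good g}"
  proof (rule inj_onI)
    fix g h assume gh: "g \<in> {g. good g}" "h \<in> {g. good g}" "?R g = ?R h"
    show "g = h"
    proof (rule ext)
      fix y show "g y = h y"
      proof (cases "y \<in> X")
        case True then show ?thesis using gh(3) by (metis restrict_apply')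
      next
        case False then show ?thesis using gh(1,2) by (simp add: good_def)
      qed
    qed
  qed
  ultimately show ?thesis using finite_imageD by blast
qed

lemma finite_GG: "finite GG"
  using finite_good GG_good by (metis (mono_tags, lifting) finite_subset mem_Collect_eq subsetI)

lemma GG_bij: "g \<in> GG \<Longrightarrow> bij g"
  using GG_good good_def by blast

lemma GG_out: "g \<in> GG \<Longrightarrow> y \<notin> X \<Longrightarrow> g y = y"
  using GG_good good_def by blast

lemma GG_in: "g \<in> GG \<Longrightarrow> y \<in> X \<Longrightarrow> g y \<in> X"
  using GG_good good_def by blast

lemma Phi_GG: "Phi M \<in> GG"
proof (induction M)
  case empty
  show ?case unfolding Phi_empty by (rule GG_id)
next
  case (add x M)
  show ?case unfolding Phi_add by (rule GG_comp[OF s_GG add.IH])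
qed

lemma Phi_bij: "bij (Phi M)"
  using Phi_GG GG_bij by blast

lemma W_left: "s a \<circ> Phi M \<in> range Phi"
proof -
  have "Phi M (iv (Phi M) a) = a" using Phi_bij by (simp add: bij_is_surj surj_f_inv_f)
  then have "Phi (add_mset (iv (Phi M) a) M) = s a \<circ> Phi M" by (simp add: Phi_add)
  then show ?thesis by (metis rangeI)
qed

lemma W_comp: "Phi M \<circ> Phi N \<in> range Phi"
proof (induction M)
  case empty
  then show ?case by simp
next
  case (add x M)
  from add.IH obtain K where K: "Phi M \<circ> Phi N = Phi K" by (rule rangeE)
  have "Phi (add_mset x M) \<circ> Phi N = s (Phi M x) \<circ> (Phi M \<circ> Phi N)"
    by (simp only: Phi_add o_assoc)
  also have "\<dots> = s (Phi M x) \<circ> Phi K" by (simp only: K)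
  finally show ?case using W_left by (simp only:)
qed

lemma W_inv: "iv (Phi M) \<in> range Phi"
proof -
  let ?L = "\<lambda>x. Phi M \<circ> x"
  have fin: "finite (range Phi)"
    using finite_GG Phi_GG by (metis finite_subset image_subsetI)
  have sub: "?L ` range Phi \<subseteq> range Phi" using W_comp by auto
  have inj: "inj_on ?L (range Phi)"
  proof (rule inj_onI)
    fix a b assume "Phi M \<circ> a = Phi M \<circ> b"
    then show "a = b" using Phi_bij[of M] by (metis bij_is_inj fun.inj_map_strong inj_eq)
  qed
  have "?L ` range Phi = range Phi" using endo_inj_surj[OF fin sub inj] .
  moreover have "id \<in> range Phi" by (metis Phi_empty rangeI)
  ultimately obtain x where x: "x \<in> range Phi" "Phi M \<circ> x = id" by (metis imageE)
  have "iv (Phi M) = iv (Phi M) \<circ> (Phi M \<circ> x)" using x by simp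
  also have "\<dots> = (iv (Phi M) \<circ> Phi M) \<circ> x" by (simp add: o_assoc)
  also have "\<dots> = x" using Phi_bij[of M] by (simp add: bij_is_inj)
  finally have "iv (Phi M) = x" .
  then show ?thesis using x by simp
qed

lemma GG_Phi: "g \<in> GG \<Longrightarrow> \<exists>M. Phi M = g"
  unfolding perm_group_cs_def
proof (induction rule: gen_perm_group.induct)
  case gen_id
  then show ?case by (metis Phi_empty)
next
  case (gen_gen s')
  then show ?case using sigma_eq_s Phi_single by auto
next
  case (gen_comp g h)
  then show ?case using W_comp by (metis imageE)
next
  case (gen_inv g)
  then show ?case using W_inv by (metis imageE)
qed

end



context CS
begin

definition rep :: "('a \<Rightarrow> 'a) \<Rightarrow> 'a multiset" where
  "rep g = (SOME M. Phi M = g)"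

lemma rep: "g \<in> GG \<Longrightarrow> Phi (rep g) = g"
  unfolding rep_def using GG_Phi by (metis (mono_tags) someI_ex)

lemma Phi_surj_comp: "Phi K \<circ> iv (Phi K) = id"
  using Phi_bij[of K] by (metis bij_is_surj surj_iff)

lemma Phi_img: "Phi (image_mset (Phi K) M) = Phi (image_mset (Phi M) K) \<circ> Phi M \<circ> iv (Phi K)"
proof -
  have "Phi (image_mset (Phi K) M) \<circ> Phi K = Phi (K + M)" by (simp only: Phi_union)
  also have "\<dots> = Phi (M + K)" by (simp only: add.commute)
  also have "\<dots> = Phi (image_mset (Phi M) K) \<circ> Phi M" by (simp only: Phi_union)
  finally have e: "Phi (image_mset (Phi K) M) \<circ> Phi K = Phi (image_mset (Phi M) K) \<circ> Phi M" .
  have "Phi (image_mset (Phi K) M) = Phi (image_mset (Phi K) M) \<circ> (Phi K \<circ> iv (Phi K))"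
    by (simp only: Phi_surj_comp comp_id)
  also have "\<dots> = (Phi (image_mset (Phi K) M) \<circ> Phi K) \<circ> iv (Phi K)" by (simp only: o_assoc)
  also have "\<dots> = Phi (image_mset (Phi M) K) \<circ> Phi M \<circ> iv (Phi K)" by (simp only: e)
  finally show ?thesis .
qed

lemma lam_wd: "Phi M = Phi N \<Longrightarrow> g \<in> GG \<Longrightarrow> Phi (image_mset g M) = Phi (image_mset g N)"
proof -
  assume e: "Phi M = Phi N" and g: "g \<in> GG"
  obtain K where K: "Phi K = g" using GG_Phi[OF g] by blast
  show ?thesis unfolding K[symmetric] using Phi_img[of K M] Phi_img[of K N] e by simp
qed

definition lam :: "('a \<Rightarrow> 'a) \<Rightarrow> ('a \<Rightarrow> 'a) \<Rightarrow> ('a \<Rightarrow> 'a)" where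
  "lam g k = Phi (image_mset g (rep k))"

lemma lam_Phi: "g \<in> GG \<Longrightarrow> lam g (Phi N) = Phi (image_mset g N)"
  unfolding lam_def by (rule lam_wd[OF rep[OF Phi_GG]])

definition add :: "('a \<Rightarrow> 'a) \<Rightarrow> ('a \<Rightarrow> 'a) \<Rightarrow> ('a \<Rightarrow> 'a)" where
  "add k l = Phi (rep k + rep l)"

lemma Phi_cong1: "Phi M = Phi M' \<Longrightarrow> Phi (M + N) = Phi (M' + N)"
  by (simp only: Phi_union)

lemma Phi_cong: "Phi M = Phi M' \<Longrightarrow> Phi N = Phi N' \<Longrightarrow> Phi (M + N) = Phi (M' + N')"
proof -
  assume a: "Phi M = Phi M'" and b: "Phi N = Phi N'"
  have "Phi (M + N) = Phi (M' + N)" using Phi_cong1[OF a] .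
  also have "\<dots> = Phi (N + M')" by (simp only: add.commute)
  also have "\<dots> = Phi (N' + M')" using Phi_cong1[OF b] .
  also have "\<dots> = Phi (M' + N')" by (simp only: add.commute)
  finally show ?thesis .
qed

lemma add_Phi: "add (Phi M) (Phi N) = Phi (M + N)"
  unfolding add_def by (rule Phi_cong[OF rep[OF Phi_GG] rep[OF Phi_GG]])

lemma add_GG: "add k l \<in> GG"
  unfolding add_def by (rule Phi_GG)

lemma lam_GG: "lam g k \<in> GG"
  unfolding lam_def by (rule Phi_GG)

lemma brace: "g \<in> GG \<Longrightarrow> k \<in> GG \<Longrightarrow> add g k = lam g k \<circ> g"
proof -
  assume g: "g \<in> GG" and k: "k \<in> GG"
  obtain M where M: "Phi M = g" using GG_Phi[OF g] by blast
  obtain N where N: "Phi N = k" using GG_Phi[OF k] by blast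
  show ?thesis unfolding M[symmetric] N[symmetric] add_Phi lam_Phi[OF Phi_GG]
    by (rule Phi_union)
qed

lemma lam_comp: "g \<in> GG \<Longrightarrow> h \<in> GG \<Longrightarrow> k \<in> GG \<Longrightarrow> lam g (lam h k) = lam (g \<circ> h) k"
proof -
  assume g: "g \<in> GG" and h: "h \<in> GG" and k: "k \<in> GG"
  obtain N where N: "Phi N = k" using GG_Phi[OF k] by blast
  have gh: "g \<circ> h \<in> GG" using GG_comp[OF g h] .
  show ?thesis unfolding N[symmetric] lam_Phi[OF h] lam_Phi[OF g] lam_Phi[OF gh]
    by (simp only: multiset.map_comp)
qed

lemma lam_id: "k \<in> GG \<Longrightarrow> lam id k = k"
proof -
  assume k: "k \<in> GG"
  obtain N where N: "Phi N = k" using GG_Phi[OF k] by blast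
  show ?thesis unfolding N[symmetric] lam_Phi[OF GG_id] by (simp only: multiset.map_id)
qed

lemma lam_add: "g \<in> GG \<Longrightarrow> k \<in> GG \<Longrightarrow> l \<in> GG \<Longrightarrow> lam g (add k l) = add (lam g k) (lam g l)"
proof -
  assume g: "g \<in> GG" and k: "k \<in> GG" and l: "l \<in> GG"
  obtain M where M: "Phi M = k" using GG_Phi[OF k] by blast
  obtain N where N: "Phi N = l" using GG_Phi[OF l] by blast
  show ?thesis unfolding M[symmetric] N[symmetric] add_Phi lam_Phi[OF g]
    by (simp only: image_mset_union)
qed

lemma lam_s: "g \<in> GG \<Longrightarrow> lam g (s x) = s (g x)"
  using lam_Phi[of g "{#x#}"] by (simp add: Phi_single)

lemma lam_sigma: "g \<in> GG \<Longrightarrow> x \<in> X \<Longrightarrow> lam g (sigma X op x) = sigma X op (g x)"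
  using lam_s GG_in sigma_eq_s by metis

lemma add_comm: "add k l = add l k"
  unfolding add_def by (simp only: add.commute)

lemma add_assoc: "k \<in> GG \<Longrightarrow> l \<in> GG \<Longrightarrow> m \<in> GG \<Longrightarrow> add (add k l) m = add k (add l m)"
proof -
  assume k: "k \<in> GG" and l: "l \<in> GG" and m: "m \<in> GG"
  obtain K where K: "Phi K = k" using GG_Phi[OF k] by blast
  obtain L where L: "Phi L = l" using GG_Phi[OF l] by blast
  obtain M where M: "Phi M = m" using GG_Phi[OF m] by blast
  show ?thesis unfolding K[symmetric] L[symmetric] M[symmetric] add_Phi
    by (simp only: add.assoc)
qed

lemma add_id: "k \<in> GG \<Longrightarrow> add id k = k"
proof -
  assume k: "k \<in> GG"
  obtain K where K: "Phi K = k" using GG_Phi[OF k] by blast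
  show ?thesis unfolding K[symmetric] Phi_empty[symmetric] add_Phi by simp
qed

lemma lam_inv: "g \<in> GG \<Longrightarrow> k \<in> GG \<Longrightarrow> lam (iv g) (lam g k) = k"
proof -
  assume g: "g \<in> GG" and k: "k \<in> GG"
  have "iv g \<circ> g = id" using GG_bij[OF g] by (metis bij_is_inj inv_o_cancel)
  then show ?thesis using lam_comp[OF GG_inv[OF g] g k] lam_id[OF k] by simp
qed

lemma lam_inv2: "g \<in> GG \<Longrightarrow> k \<in> GG \<Longrightarrow> lam g (lam (iv g) k) = k"
proof -
  assume g: "g \<in> GG" and k: "k \<in> GG"
  have "g \<circ> iv g = id" using GG_bij[OF g] by (metis bij_is_surj surj_iff)
  then show ?thesis using lam_comp[OF g GG_inv[OF g] k] lam_id[OF k] by simp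
qed

lemma add_cancel: "g \<in> GG \<Longrightarrow> k \<in> GG \<Longrightarrow> l \<in> GG \<Longrightarrow> add g k = add g l \<Longrightarrow> k = l"
proof -
  assume g: "g \<in> GG" and k: "k \<in> GG" and l: "l \<in> GG" and e: "add g k = add g l"
  have "lam g k \<circ> g = lam g l \<circ> g" using e brace[OF g k] brace[OF g l] by simp
  then have "lam g k = lam g l"
    using GG_bij[OF g] by (metis bij_is_surj fun.map_comp surj_iff comp_id)
  then show "k = l" using lam_inv[OF g k] lam_inv[OF g l] by metis
qed

lemma add_inv_ex: "k \<in> GG \<Longrightarrow> \<exists>l\<in>GG. add l k = id"
proof -
  assume k: "k \<in> GG"
  have sub: "(\<lambda>l. add k l) ` GG \<subseteq> GG" using add_GG by auto
  have inj: "inj_on (\<lambda>l. add k l) GG" using add_cancel[OF k] by (auto intro: inj_onI)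
  have "(\<lambda>l. add k l) ` GG = GG" using endo_inj_surj[OF finite_GG sub inj] .
  then obtain l where "l \<in> GG" "add k l = id" using GG_id by (metis imageE)
  then show ?thesis using add_comm by metis
qed

definition BB :: "('a \<Rightarrow> 'a) monoid" where
  "BB = \<lparr>carrier = GG, monoid.mult = add, one = id\<rparr>"

lemma BB_simps[simp]: "carrier BB = GG" "monoid.mult BB = add" "one BB = id"
  by (simp_all add: BB_def)

lemma BB_cg: "comm_group BB"
proof (rule comm_groupI)
  show "\<And>x y. x \<in> carrier BB \<Longrightarrow> y \<in> carrier BB \<Longrightarrow> x \<otimes>\<^bsub>BB\<^esub> y \<in> carrier BB"
    by (simp add: add_GG)
  show "\<one>\<^bsub>BB\<^esub> \<in> carrier BB" by (simp add: GG_id)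
  show "\<And>x y z. x \<in> carrier BB \<Longrightarrow> y \<in> carrier BB \<Longrightarrow> z \<in> carrier BB \<Longrightarrow>
      x \<otimes>\<^bsub>BB\<^esub> y \<otimes>\<^bsub>BB\<^esub> z = x \<otimes>\<^bsub>BB\<^esub> (y \<otimes>\<^bsub>BB\<^esub> z)"
    by (simp add: add_assoc)
  show "\<And>x y. x \<in> carrier BB \<Longrightarrow> y \<in> carrier BB \<Longrightarrow> x \<otimes>\<^bsub>BB\<^esub> y = y \<otimes>\<^bsub>BB\<^esub> x"
    by (simp add: add_comm)
  show "\<And>x. x \<in> carrier BB \<Longrightarrow> \<one>\<^bsub>BB\<^esub> \<otimes>\<^bsub>BB\<^esub> x = x"
    by (simp add: add_id)
  show "\<And>x. x \<in> carrier BB \<Longrightarrow> \<exists>y\<in>carrier BB. y \<otimes>\<^bsub>BB\<^esub> x = \<one>\<^bsub>BB\<^esub>"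
    by (simp add: add_inv_ex)
qed

end



locale CSF = CS +
  assumes frob: "frobenius_action (perm_group_cs X op) X"
begin

lemma trans: "x \<in> X \<Longrightarrow> y \<in> X \<Longrightarrow> \<exists>g\<in>GG. g x = y"
  using frob unfolding frobenius_action_def by blast

lemma fix1: "g \<in> GG \<Longrightarrow> g \<noteq> id \<Longrightarrow> x \<in> X \<Longrightarrow> y \<in> X \<Longrightarrow> g x = x \<Longrightarrow> g y = y \<Longrightarrow> x = y"
proof (rule ccontr)
  assume g: "g \<in> GG" "g \<noteq> id" and xy: "x \<in> X" "y \<in> X" "g x = x" "g y = y" "x \<noteq> y"
  have le: "card {x\<in>X. g x = x} \<le> 1" using frob g unfolding frobenius_action_def by blast
  have "{x, y} \<subseteq> {x\<in>X. g x = x}" using xy by auto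
  moreover have "finite {x\<in>X. g x = x}" using finX by simp
  ultimately have "card {x, y} \<le> card {x\<in>X. g x = x}" by (rule card_mono[rotated])
  then show False using le xy by simp
qed

lemma witness: "\<exists>g\<in>GG. g \<noteq> id \<and> (\<exists>a\<in>X. g a = a)"
  using frob unfolding frobenius_action_def by blast

lemma GG_iv_f: "g \<in> GG \<Longrightarrow> iv g (g y) = y"
  using GG_bij by (metis bij_is_inj inv_f_f)

lemma GG_f_iv: "g \<in> GG \<Longrightarrow> g (iv g y) = y"
  using GG_bij by (metis bij_is_surj surj_f_inv_f)

lemma GG_inj: "g \<in> GG \<Longrightarrow> g x = g y \<Longrightarrow> x = y"
  using GG_iv_f by metis

definition Stab :: "'a \<Rightarrow> ('a \<Rightarrow> 'a) set" where
  "Stab x = {g \<in> GG. g x = x}"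

lemma Stab_sub: "Stab x \<subseteq> GG" by (auto simp: Stab_def)

lemma finite_Stab: "finite (Stab x)"
  using finite_GG Stab_sub finite_subset by blast

lemma Stab_comp: "u \<in> Stab x \<Longrightarrow> v \<in> Stab x \<Longrightarrow> u \<circ> v \<in> Stab x"
  by (auto simp: Stab_def GG_comp)

lemma Stab_inv: "u \<in> Stab x \<Longrightarrow> iv u \<in> Stab x"
  unfolding Stab_def using GG_inv GG_iv_f by (metis (mono_tags, lifting) mem_Collect_eq)

lemma Stab_id: "id \<in> Stab x" by (simp add: Stab_def GG_id)

lemma orbit_stab:
  assumes x: "x \<in> X"
  shows "card GG = card X * card (Stab x)"
proof -
  define F where "F y = {g \<in> GG. g x = y}" for y
  have U: "GG = (\<Union>y\<in>X. F y)" using GG_in x by (auto simp: F_def)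
  have cF: "card (F y) = card (Stab x)" if y: "y \<in> X" for y
  proof -
    obtain g where g: "g \<in> GG" "g x = y" using trans[OF x y] by blast
    have "bij_betw (\<lambda>l. g \<circ> l) (Stab x) (F y)"
    proof (rule bij_betwI[where g = "\<lambda>m. iv g \<circ> m"])
      show "(\<lambda>l. g \<circ> l) \<in> Stab x \<rightarrow> F y" using g by (auto simp: Stab_def F_def GG_comp)
      show "(\<lambda>m. iv g \<circ> m) \<in> F y \<rightarrow> Stab x"
        using g by (auto simp: Stab_def F_def GG_comp GG_inv GG_iv_f)
      show "iv g \<circ> (g \<circ> l) = l" for l
        using g GG_iv_f by (auto simp: fun_eq_iff)
      show "g \<circ> (iv g \<circ> m) = m" for m
        using g GG_f_iv by (auto simp: fun_eq_iff)
    qed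
    then show ?thesis by (metis bij_betw_same_card)
  qed
  have "card GG = (\<Sum>y\<in>X. card (F y))"
    unfolding U
  proof (rule card_UN_disjoint)
    show "finite X" by (rule finX)
    show "\<forall>i\<in>X. finite (F i)" using finite_GG by (auto simp: F_def)
    show "\<forall>i\<in>X. \<forall>j\<in>X. i \<noteq> j \<longrightarrow> F i \<inter> F j = {}" by (auto simp: F_def)
  qed
  also have "\<dots> = (\<Sum>y\<in>X. card (Stab x))" using cF by simp
  finally show ?thesis by simp
qed

lemma semireg:
  assumes a: "a \<in> X"
  shows "card (Stab a) dvd (card X - 1)"
proof -
  define Orb where "Orb y = (\<lambda>u. u y) ` Stab a" for y
  define C where "C = Orb ` (X - {a})"
  have Osub: "Orb y \<subseteq> X - {a}" if y: "y \<in> X - {a}" for y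
  proof
    fix z assume "z \<in> Orb y"
    then obtain u where u: "u \<in> Stab a" "z = u y" by (auto simp: Orb_def)
    have "z \<in> X" using u y GG_in by (auto simp: Stab_def)
    moreover have "z \<noteq> a"
    proof
      assume "z = a"
      then have "u y = u a" using u by (simp add: Stab_def)
      then have "y = a" using u GG_inj by (auto simp: Stab_def)
      then show False using y by simp
    qed
    ultimately show "z \<in> X - {a}" by simp
  qed
  have yO: "y \<in> Orb y" for y
  proof -
    have "id y \<in> (\<lambda>u. u y) ` Stab a" using Stab_id[of a] by (rule imageI)
    then show ?thesis by (simp add: Orb_def)
  qed
  have UC: "\<Union>C = X - {a}" using Osub yO by (auto simp: C_def)
  have cO: "card (Orb y) = card (Stab a)" if y: "y \<in> X - {a}" for y
  proof -
    have "inj_on (\<lambda>u. u y) (Stab a)"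
    proof (rule inj_onI)
      fix u v assume u: "u \<in> Stab a" and v: "v \<in> Stab a" and e: "u y = v y"
      let ?w = "iv v \<circ> u"
      have w: "?w \<in> Stab a" using Stab_comp[OF Stab_inv[OF v] u] .
      have wy: "?w y = y" using e v GG_iv_f by (auto simp: Stab_def)
      have "?w = id"
      proof (rule ccontr)
        assume "?w \<noteq> id"
        then have "a = y" using fix1[of ?w a y] w wy a y by (auto simp: Stab_def)
        then show False using y by simp
      qed
      then have "v \<circ> ?w = v" by simp
      moreover have "v \<circ> ?w = u" using v GG_f_iv by (auto simp: fun_eq_iff Stab_def)
      ultimately show "u = v" by simp
    qed
    then show ?thesis by (simp add: Orb_def card_image)
  qed
  have disj: "Orb y \<inter> Orb z = {} \<or> Orb y = Orb z" for y z
  proof (cases "Orb y \<inter> Orb z = {}")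
    case False
    then obtain u v where u: "u \<in> Stab a" and v: "v \<in> Stab a" and e: "u y = v z"
      by (auto simp: Orb_def)
    have sub: "Orb y \<subseteq> Orb z" if u: "u \<in> Stab a" and v: "v \<in> Stab a" and e: "u y = v z" for u v y z
    proof
      fix t assume "t \<in> Orb y"
      then obtain w where w: "w \<in> Stab a" "t = w y" by (auto simp: Orb_def)
      have "y = iv u (v z)" using e u GG_iv_f by (metis Stab_sub subsetD)
      then have "t = (w \<circ> iv u \<circ> v) z" using w by simp
      moreover have "w \<circ> iv u \<circ> v \<in> Stab a" using Stab_comp Stab_inv w u v by blast
      ultimately have "t \<in> (\<lambda>u. u z) ` Stab a" by (metis image_eqI)
      then show "t \<in> Orb z" by (simp add: Orb_def)
    qed
    have "Orb y \<subseteq> Orb z" using sub[OF u v e] .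
    moreover have "Orb z \<subseteq> Orb y" using sub[OF v u e[symmetric]] .
    ultimately show ?thesis by blast
  qed simp
  have "card (Stab a) * card C = card (\<Union>C)"
  proof (rule card_partition)
    show "finite C" using finX by (simp add: C_def)
    show "finite (\<Union>C)" using UC finX by simp
    show "\<And>c. c \<in> C \<Longrightarrow> card c = card (Stab a)" using cO by (auto simp: C_def)
    show "\<And>c1 c2. c1 \<in> C \<Longrightarrow> c2 \<in> C \<Longrightarrow> c1 \<noteq> c2 \<Longrightarrow> c1 \<inter> c2 = {}"
      using disj by (auto simp: C_def)
  qed
  then have "card (Stab a) * card C = card X - 1" using UC a finX by simp
  then show ?thesis by (metis dvd_triv_left)
qed

end



lemma coprime_order_torsion:
  fixes G (structure)
  assumes G: "group G" and fin: "finite (carrier G)"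
    and tor: "\<And>x. x \<in> carrier G \<Longrightarrow> x [^] (m::nat) = \<one>" and cop: "coprime m r"
  shows "coprime (order G) r"
proof (rule ccontr)
  assume nc: "\<not> coprime (order G) r"
  interpret group G by (rule G)
  have "gcd (order G) r \<noteq> 1" using nc by (simp add: coprime_iff_gcd_eq_1)
  then obtain p where p: "prime p" "p dvd gcd (order G) r" using prime_factor_nat by blast
  then have pG: "p dvd order G" and pr: "p dvd r" by auto
  have pm: "\<not> p dvd m"
  proof
    assume "p dvd m"
    then have "is_unit p" using coprime_common_divisor[OF cop _ pr] by simp
    then show False using p(1) by simp
  qed
  obtain k where k: "order G = p ^ 1 * k" using pG by auto
  obtain H where H: "subgroup H G" "card H = p ^ 1" using sylow_thm[OF p(1) G k fin] by blast
  have "card H \<ge> 2" using H(2) p(1) prime_ge_2_nat by simp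
  then have "H \<noteq> {\<one>}" by auto
  moreover have "\<one> \<in> H" using H(1) by (rule subgroup.one_closed)
  ultimately obtain x where x: "x \<in> H" "x \<noteq> \<one>" by blast
  have xc: "x \<in> carrier G" by (rule subgroup.mem_carrier[OF H(1) x(1)])
  have gH: "group (G\<lparr>carrier := H\<rparr>)" using subgroup_imp_group[OF H(1)] .
  have "card H > 0" using H(2) p(1) prime_gt_0_nat by simp
  then have "finite H" by (rule card_ge_0_finite)
  then have finH: "finite (carrier (G\<lparr>carrier := H\<rparr>))" by simp
  have "x [^]\<^bsub>G\<lparr>carrier := H\<rparr>\<^esub> order (G\<lparr>carrier := H\<rparr>) = \<one>\<^bsub>G\<lparr>carrier := H\<rparr>\<^esub>"
    using group.pow_order_eq_1[OF gH] x(1) finH by (simp add: group.pow_order_eq_1[OF gH])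
  then have xp: "x [^] p = \<one>" using H(2) by (simp add: order_def nat_pow_consistent[symmetric])
  have "ord x dvd p" using xp pow_eq_id[OF xc] by simp
  moreover have "ord x dvd m" using tor[OF xc] pow_eq_id[OF xc] by simp
  ultimately have "ord x dvd gcd p m" by simp
  moreover have "gcd p m = 1" using p(1) pm by (metis coprime_iff_gcd_eq_1 prime_imp_coprime)
  ultimately have "ord x dvd 1" by simp
  then have "x [^] (1::nat) = \<one>" using pow_eq_id[OF xc, of "1::nat"] by blast
  then have "x = \<one>" using xc by (simp add: nat_pow_eone)
  then show False using x(2) by simp
qed

context CS
begin

interpretation B: comm_group BB by (rule BB_cg)

lemma mult_BB: "x \<otimes>\<^bsub>BB\<^esub> y = add x y" by simp

lemma lam_one: "g \<in> GG \<Longrightarrow> lam g id = id"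
  using lam_Phi[of g "{#}"] by simp

lemma lam_pow: "g \<in> GG \<Longrightarrow> x \<in> GG \<Longrightarrow> lam g (x [^]\<^bsub>BB\<^esub> (k::nat)) = (lam g x) [^]\<^bsub>BB\<^esub> k"
proof (induction k)
  case 0
  then show ?case using lam_one by (simp add: id_def)
next
  case (Suc k)
  have xk: "x [^]\<^bsub>BB\<^esub> k \<in> GG" using B.nat_pow_closed[of x k] Suc.prems by simp
  show ?case using Suc lam_add[OF Suc.prems(1) xk Suc.prems(2)] by simp
qed

lemma lam_binv: "g \<in> GG \<Longrightarrow> x \<in> GG \<Longrightarrow> lam g (inv\<^bsub>BB\<^esub> x) = inv\<^bsub>BB\<^esub> (lam g x)"
proof -
  assume g: "g \<in> GG" and x: "x \<in> GG"
  have ix: "inv\<^bsub>BB\<^esub> x \<in> GG" using B.inv_closed[of x] x by simp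
  have "add (lam g (inv\<^bsub>BB\<^esub> x)) (lam g x) = lam g (add (inv\<^bsub>BB\<^esub> x) x)"
    using lam_add[OF g ix x] by simp
  also have "add (inv\<^bsub>BB\<^esub> x) x = id" using B.l_inv[of x] x by simp
  finally have "add (lam g (inv\<^bsub>BB\<^esub> x)) (lam g x) = id" using lam_one[OF g] by (simp add: id_def)
  then show ?thesis using B.inv_equality[of "lam g (inv\<^bsub>BB\<^esub> x)" "lam g x"] lam_GG by simp
qed

lemma lam_finprod:
  assumes g: "g \<in> GG" and fA: "finite A" and ff: "ff \<in> A \<rightarrow> GG"
  shows "lam g (finprod BB ff A) = finprod BB (\<lambda>v. lam g (ff v)) A"
  using fA ff
proof (induction A rule: finite_induct)
  case empty
  then show ?case using lam_one[OF g] by (simp add: id_def)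
next
  case (insert y A)
  have fA: "ff \<in> A \<rightarrow> carrier BB" and fy: "ff y \<in> carrier BB" using insert.prems by auto
  have lA: "(\<lambda>v. lam g (ff v)) \<in> A \<rightarrow> carrier BB" and ly: "lam g (ff y) \<in> carrier BB"
    using lam_GG by auto
  have "lam g (finprod BB ff (insert y A)) = lam g (add (ff y) (finprod BB ff A))"
    using B.finprod_insert[OF insert.hyps fA fy] by simp
  also have "\<dots> = add (lam g (ff y)) (lam g (finprod BB ff A))"
    using lam_add[OF g] fy B.finprod_closed[OF fA] by simp
  also have "\<dots> = add (lam g (ff y)) (finprod BB (\<lambda>v. lam g (ff v)) A)"
    using insert.IH insert.prems by auto
  also have "\<dots> = finprod BB (\<lambda>v. lam g (ff v)) (insert y A)"
    using B.finprod_insert[OF insert.hyps lA ly] by simp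
  finally show ?case .
qed

end



locale CSF2 = CSF +
  fixes a :: 'a and g0 :: "'a \<Rightarrow> 'a"
  assumes aX: "a \<in> X" and g0G: "g0 \<in> GG" and g0n: "g0 \<noteq> id" and g0a: "g0 a = a"
begin

interpretation B: comm_group BB by (rule BB_cg)

lemma pow_id[simp]: "id [^]\<^bsub>BB\<^esub> (k::nat) = id"
  using B.nat_pow_one[of k] by simp

lemma binv_id[simp]: "inv\<^bsub>BB\<^esub> id = id"
  using B.inv_one by simp

lemma add_id_l[simp]: "x \<in> GG \<Longrightarrow> add id x = x"
  by (rule add_id)

lemma add_id_r[simp]: "x \<in> GG \<Longrightarrow> add x id = x"
  using add_id add_comm by metis

lemma pow_one1[simp]: "x \<in> GG \<Longrightarrow> x [^]\<^bsub>BB\<^esub> (1::nat) = x"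
  using B.nat_pow_eone[of x] by simp

lemma pow_pow: "x \<in> GG \<Longrightarrow> (x [^]\<^bsub>BB\<^esub> (i::nat)) [^]\<^bsub>BB\<^esub> (j::nat) = x [^]\<^bsub>BB\<^esub> (i * j)"
  using B.nat_pow_pow[of x i j] by simp

lemma pow_mult: "x \<in> GG \<Longrightarrow> add (x [^]\<^bsub>BB\<^esub> (i::nat)) (x [^]\<^bsub>BB\<^esub> (j::nat)) = x [^]\<^bsub>BB\<^esub> (i + j)"
  using B.nat_pow_mult[of x i j] by simp

definition "n = card X"
definition "h = card (Stab a)"

lemma N: "card GG = n * h"
  using orbit_stab[OF aX] by (simp add: n_def h_def)

lemma n_pos: "n > 0" using aX finX by (auto simp: n_def card_gt_0_iff)

lemma h_pos: "h > 0" using Stab_id finite_Stab by (auto simp: h_def card_gt_0_iff)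

lemma cop: "coprime n h"
proof -
  have d: "h dvd n - 1" using semireg[OF aX] by (simp add: n_def h_def)
  obtain m where m: "n = Suc m" using n_pos by (cases n) auto
  have "coprime n (n - 1)" using m by simp
  then show ?thesis using coprime_divisors[OF dvd_refl d] by blast
qed

lemma cop': "coprime h n" using cop by (simp add: coprime_commute)

definition "al = (SOME x. \<exists>y. n * x = h * y + 1)"
definition "be = (SOME y. n * al = h * y + 1)"
definition "ga = (SOME x. \<exists>y. h * x = n * y + 1)"
definition "de = (SOME y. h * ga = n * y + 1)"

lemma ab: "n * al = h * be + 1"
proof -
  have "\<exists>x y. n * x = h * y + gcd n h" using bezout_nat n_pos by blast
  then have "\<exists>x y. n * x = h * y + 1" using cop by (simp add: coprime_iff_gcd_eq_1)
  then have "\<exists>y. n * al = h * y + 1" unfolding al_def by (rule someI_ex)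
  then show ?thesis unfolding be_def by (rule someI_ex)
qed

lemma gd: "h * ga = n * de + 1"
proof -
  have "\<exists>x y. h * x = n * y + gcd h n" using bezout_nat h_pos by blast
  then have "\<exists>x y. h * x = n * y + 1" using cop' by (simp add: coprime_iff_gcd_eq_1)
  then have "\<exists>y. h * ga = n * y + 1" unfolding ga_def by (rule someI_ex)
  then show ?thesis unfolding de_def by (rule someI_ex)
qed

definition "P = {x \<in> GG. x [^]\<^bsub>BB\<^esub> n = id}"
definition "Q = {x \<in> GG. x [^]\<^bsub>BB\<^esub> h = id}"
definition "qq x = x [^]\<^bsub>BB\<^esub> (n * al)"
definition "pp x = inv\<^bsub>BB\<^esub> (x [^]\<^bsub>BB\<^esub> (h * be))"

lemma powN: "x \<in> GG \<Longrightarrow> x [^]\<^bsub>BB\<^esub> (n * h * k) = id"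
proof -
  assume x: "x \<in> GG"
  have "x [^]\<^bsub>BB\<^esub> order BB = \<one>\<^bsub>BB\<^esub>" using B.pow_order_eq_1[of x] x by simp
  then have "x [^]\<^bsub>BB\<^esub> (n * h) = id" using N by (simp add: order_def)
  then have "(x [^]\<^bsub>BB\<^esub> (n * h)) [^]\<^bsub>BB\<^esub> k = id" by simp
  then show ?thesis using pow_pow[OF x] by simp
qed

lemma pow_closed: "x \<in> GG \<Longrightarrow> x [^]\<^bsub>BB\<^esub> (k::nat) \<in> GG"
  using B.nat_pow_closed[of x k] by simp

lemma binv_closed: "x \<in> GG \<Longrightarrow> inv\<^bsub>BB\<^esub> x \<in> GG"
  using B.inv_closed[of x] by simp

lemma qq_GG: "x \<in> GG \<Longrightarrow> qq x \<in> GG" by (simp add: qq_def pow_closed)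
lemma pp_GG: "x \<in> GG \<Longrightarrow> pp x \<in> GG" by (simp add: pp_def pow_closed binv_closed)

lemma qq_Q: "x \<in> GG \<Longrightarrow> qq x \<in> Q"
proof -
  assume x: "x \<in> GG"
  have "(x [^]\<^bsub>BB\<^esub> (n * al)) [^]\<^bsub>BB\<^esub> h = x [^]\<^bsub>BB\<^esub> (n * h * al)"
    using pow_pow[OF x] by (simp add: ac_simps)
  also have "\<dots> = id" using powN[OF x] .
  finally show ?thesis using x by (simp add: Q_def qq_def pow_closed)
qed

lemma pp_P: "x \<in> GG \<Longrightarrow> pp x \<in> P"
proof -
  assume x: "x \<in> GG"
  have c: "x [^]\<^bsub>BB\<^esub> (h * be) \<in> carrier BB" using x pow_closed by simp
  have e1: "(x [^]\<^bsub>BB\<^esub> (h * be)) [^]\<^bsub>BB\<^esub> n = x [^]\<^bsub>BB\<^esub> (n * h * be)"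
    using pow_pow[OF x] by (simp add: ac_simps)
  have e2: "x [^]\<^bsub>BB\<^esub> (n * h * be) = id" using powN[OF x] .
  have e3: "(inv\<^bsub>BB\<^esub> (x [^]\<^bsub>BB\<^esub> (h * be))) [^]\<^bsub>BB\<^esub> n
      = inv\<^bsub>BB\<^esub> ((x [^]\<^bsub>BB\<^esub> (h * be)) [^]\<^bsub>BB\<^esub> n)"
    using B.nat_pow_inv[OF c] .
  have "(inv\<^bsub>BB\<^esub> (x [^]\<^bsub>BB\<^esub> (h * be))) [^]\<^bsub>BB\<^esub> n = id"
    unfolding e3 e1 e2 by simp
  then show ?thesis using x by (simp add: P_def pp_def pow_closed binv_closed)
qed

lemma decomp: "x \<in> GG \<Longrightarrow> add (qq x) (pp x) = x"
proof -
  assume x: "x \<in> GG"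
  let ?y = "x [^]\<^bsub>BB\<^esub> (h * be)"
  have y: "?y \<in> carrier BB" using x pow_closed by simp
  have xc: "x \<in> carrier BB" using x by simp
  have "qq x = x [^]\<^bsub>BB\<^esub> (h * be + 1)" using ab by (simp add: qq_def)
  also have "\<dots> = add ?y (x [^]\<^bsub>BB\<^esub> (1::nat))" using pow_mult[OF x, of "h * be" 1] by simp
  also have "\<dots> = ?y \<otimes>\<^bsub>BB\<^esub> x" using x by simp
  finally have "qq x = ?y \<otimes>\<^bsub>BB\<^esub> x" .
  then have "qq x \<otimes>\<^bsub>BB\<^esub> pp x = (?y \<otimes>\<^bsub>BB\<^esub> x) \<otimes>\<^bsub>BB\<^esub> inv\<^bsub>BB\<^esub> ?y"
    by (simp add: pp_def)
  also have "\<dots> = x" using y xc by (metis B.inv_closed B.m_assoc B.m_comm B.r_inv B.r_one)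
  finally show ?thesis by simp
qed

lemma P_qq: "x \<in> P \<Longrightarrow> qq x = id"
proof -
  assume x: "x \<in> P"
  have xG: "x \<in> GG" using x by (simp add: P_def)
  have "qq x = (x [^]\<^bsub>BB\<^esub> n) [^]\<^bsub>BB\<^esub> al" using pow_pow[OF xG] by (simp add: qq_def)
  then show ?thesis using x by (simp add: P_def)
qed

lemma PQ: "x \<in> P \<Longrightarrow> x \<in> Q \<Longrightarrow> x = id"
proof -
  assume xP: "x \<in> P" and xQ: "x \<in> Q"
  have x: "x \<in> GG" using xP by (simp add: P_def)
  have "x [^]\<^bsub>BB\<^esub> (h * be) = (x [^]\<^bsub>BB\<^esub> h) [^]\<^bsub>BB\<^esub> be" using pow_pow[OF x] by simp
  then have "x [^]\<^bsub>BB\<^esub> (h * be) = id" using xQ by (simp add: Q_def)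
  then have "pp x = id" by (simp add: pp_def)
  then have "add id id = x" using decomp[OF x] P_qq[OF xP] by simp
  then show ?thesis using add_id GG_id by simp
qed

lemma pow_add: "x \<in> GG \<Longrightarrow> y \<in> GG \<Longrightarrow> (add x y) [^]\<^bsub>BB\<^esub> (k::nat) = add (x [^]\<^bsub>BB\<^esub> k) (y [^]\<^bsub>BB\<^esub> k)"
  using B.pow_mult_distrib[of x y k] B.m_comm[of x y] by simp

lemma pp_add: "x \<in> GG \<Longrightarrow> y \<in> GG \<Longrightarrow> pp (add x y) = add (pp x) (pp y)"
  using pow_add B.inv_mult[of "x [^]\<^bsub>BB\<^esub> (h * be)" "y [^]\<^bsub>BB\<^esub> (h * be)"] pow_closed
  by (simp add: pp_def)

lemma pp_lam: "g \<in> GG \<Longrightarrow> x \<in> GG \<Longrightarrow> lam g (pp x) = pp (lam g x)"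
  unfolding pp_def using lam_binv lam_pow pow_closed by simp

lemma qq_lam: "g \<in> GG \<Longrightarrow> x \<in> GG \<Longrightarrow> lam g (qq x) = qq (lam g x)"
  unfolding qq_def using lam_pow by simp

lemma lam_Q: "g \<in> GG \<Longrightarrow> x \<in> Q \<Longrightarrow> lam g x \<in> Q"
proof -
  assume g: "g \<in> GG" and x: "x \<in> Q"
  have xG: "x \<in> GG" using x by (simp add: Q_def)
  have "(lam g x) [^]\<^bsub>BB\<^esub> h = lam g (x [^]\<^bsub>BB\<^esub> h)" using lam_pow[OF g xG] by simp
  also have "\<dots> = id" using x lam_one[OF g] by (simp add: Q_def)
  finally show ?thesis by (simp add: Q_def lam_GG)
qed

lemma Q_sub: "subgroup Q BB"
proof (rule B.subgroupI)
  show "Q \<subseteq> carrier BB" by (auto simp: Q_def)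
  show "Q \<noteq> {}" using GG_id by (auto simp: Q_def)
  show "inv\<^bsub>BB\<^esub> x \<in> Q" if "x \<in> Q" for x
  proof -
    have x: "x \<in> carrier BB" using that by (simp add: Q_def)
    have "(inv\<^bsub>BB\<^esub> x) [^]\<^bsub>BB\<^esub> h = inv\<^bsub>BB\<^esub> (x [^]\<^bsub>BB\<^esub> h)" using B.nat_pow_inv[OF x] .
    also have "\<dots> = id" using that by (simp add: Q_def)
    finally show ?thesis using binv_closed x by (simp add: Q_def)
  qed
  show "x \<otimes>\<^bsub>BB\<^esub> y \<in> Q" if "x \<in> Q" "y \<in> Q" for x y
  proof -
    have "(add x y) [^]\<^bsub>BB\<^esub> h = add id id" using that pow_add by (simp add: Q_def)
    also have "\<dots> = id" using add_id GG_id by simp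
    finally show ?thesis using add_GG by (simp add: Q_def)
  qed
qed

lemma finite_Q: "finite Q" using finite_GG by (simp add: Q_def)

lemma card_Q_le: "card Q \<le> h"
proof -
  have gQ: "group (BB\<lparr>carrier := Q\<rparr>)" by (rule B.subgroup_imp_group[OF Q_sub])
  have "coprime (order (BB\<lparr>carrier := Q\<rparr>)) n"
  proof (rule coprime_order_torsion[OF gQ])
    show "finite (carrier (BB\<lparr>carrier := Q\<rparr>))" using finite_Q by simp
    show "x [^]\<^bsub>BB\<lparr>carrier := Q\<rparr>\<^esub> h = \<one>\<^bsub>BB\<lparr>carrier := Q\<rparr>\<^esub>" if "x \<in> carrier (BB\<lparr>carrier := Q\<rparr>)" for x
      using that B.nat_pow_consistent[of x h Q] by (simp add: Q_def)
    show "coprime h n" by (rule cop')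
  qed
  then have c: "coprime (card Q) n" by (simp add: order_def)
  have "card (rcosets\<^bsub>BB\<^esub> Q) * card Q = order BB" using B.lagrange[OF Q_sub] .
  then have "card Q dvd n * h" using N by (metis dvd_triv_right order_def BB_simps(1))
  then have "card Q dvd h" using c by (simp add: coprime_dvd_mult_right_iff)
  then show ?thesis using h_pos by (simp add: dvd_imp_le)
qed

end



context CSF2
begin

interpretation B: comm_group BB by (rule BB_cg)

lemma comp_as_add: "u \<in> GG \<Longrightarrow> v \<in> GG \<Longrightarrow> v \<circ> u = add u (lam (iv u) v)"
proof -
  assume u: "u \<in> GG" and v: "v \<in> GG"
  have "add u (lam (iv u) v) = lam u (lam (iv u) v) \<circ> u"
    by (rule brace[OF u lam_GG])
  also have "lam u (lam (iv u) v) = v" by (rule lam_inv2[OF u v])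
  finally show ?thesis by (rule sym)
qed

definition "Sg = finprod BB pp (Stab a)"
definition "w = Sg [^]\<^bsub>BB\<^esub> ga"

lemma pp_fun: "pp \<in> Stab a \<rightarrow> carrier BB"
  using pp_GG Stab_sub by auto

lemma Sg_GG: "Sg \<in> GG"
  using B.finprod_closed[OF pp_fun] by (simp add: Sg_def)

lemma w_GG: "w \<in> GG"
  using pow_closed[OF Sg_GG] by (simp add: w_def)

lemma Sg_eq:
  assumes u: "u \<in> Stab a"
  shows "Sg = add ((pp u) [^]\<^bsub>BB\<^esub> h) (lam (iv u) Sg)"
proof -
  have uG: "u \<in> GG" using u Stab_sub by auto
  have iuG: "iv u \<in> GG" using GG_inv[OF uG] .
  have img: "(\<lambda>v. v \<circ> u) ` Stab a = Stab a"
  proof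
    show "(\<lambda>v. v \<circ> u) ` Stab a \<subseteq> Stab a" using Stab_comp u by auto
    show "Stab a \<subseteq> (\<lambda>v. v \<circ> u) ` Stab a"
    proof
      fix v assume v: "v \<in> Stab a"
      have "v \<circ> iv u \<in> Stab a" using Stab_comp[OF v Stab_inv[OF u]] .
      moreover have "(v \<circ> iv u) \<circ> u = v"
        using GG_iv_f[OF uG] by (auto simp: fun_eq_iff)
      ultimately show "v \<in> (\<lambda>v. v \<circ> u) ` Stab a" by (metis image_eqI)
    qed
  qed
  have inj: "inj_on (\<lambda>v. v \<circ> u) (Stab a)"
  proof (rule inj_onI)
    fix v1 v2 assume "v1 \<circ> u = v2 \<circ> u"
    then have "v1 (u (iv u y)) = v2 (u (iv u y))" for y by (metis comp_apply)
    then show "v1 = v2" using GG_f_iv[OF uG] by (auto simp: fun_eq_iff)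
  qed
  have e1: "Sg = finprod BB (\<lambda>v. pp (v \<circ> u)) (Stab a)"
  proof -
    have "finprod BB pp ((\<lambda>v. v \<circ> u) ` Stab a) = finprod BB (\<lambda>v. pp (v \<circ> u)) (Stab a)"
      using B.finprod_reindex[of pp "\<lambda>v. v \<circ> u" "Stab a"] img inj pp_fun by simp
    then show ?thesis unfolding img Sg_def .
  qed
  have e2: "finprod BB (\<lambda>v. pp (v \<circ> u)) (Stab a)
      = finprod BB (\<lambda>v. (pp u) \<otimes>\<^bsub>BB\<^esub> (lam (iv u) (pp v))) (Stab a)"
  proof (rule B.finprod_cong')
    show "Stab a = Stab a" ..
    show "(\<lambda>v. pp u \<otimes>\<^bsub>BB\<^esub> lam (iv u) (pp v)) \<in> Stab a \<rightarrow> carrier BB"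
      using add_GG by auto
    show "pp (v \<circ> u) = pp u \<otimes>\<^bsub>BB\<^esub> lam (iv u) (pp v)" if v: "v \<in> Stab a" for v
    proof -
      have vG: "v \<in> GG" using v Stab_sub by auto
      have "pp (v \<circ> u) = pp (add u (lam (iv u) v))" by (simp only: comp_as_add[OF uG vG])
      also have "\<dots> = add (pp u) (pp (lam (iv u) v))" using pp_add[OF uG lam_GG] .
      also have "pp (lam (iv u) v) = lam (iv u) (pp v)" using pp_lam[OF iuG vG] by simp
      finally have e: "pp (v \<circ> u) = add (pp u) (lam (iv u) (pp v))" .
      show ?thesis unfolding mult_BB by (rule e)
    qed
  qed
  have e3: "finprod BB (\<lambda>v. (pp u) \<otimes>\<^bsub>BB\<^esub> (lam (iv u) (pp v))) (Stab a)
     = finprod BB (\<lambda>v. pp u) (Stab a) \<otimes>\<^bsub>BB\<^esub> finprod BB (\<lambda>v. lam (iv u) (pp v)) (Stab a)"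
    by (rule B.finprod_multf) (use pp_GG[OF uG] lam_GG in auto)
  have e4: "finprod BB (\<lambda>v. pp u) (Stab a) = (pp u) [^]\<^bsub>BB\<^esub> h"
    using B.finprod_const[of "pp u" "Stab a"] pp_GG[OF uG] by (simp add: h_def)
  have e5: "finprod BB (\<lambda>v. lam (iv u) (pp v)) (Stab a) = lam (iv u) Sg"
  proof -
    have "pp \<in> Stab a \<rightarrow> GG" using pp_GG Stab_sub by auto
    then have "lam (iv u) (finprod BB pp (Stab a)) = finprod BB (\<lambda>v. lam (iv u) (pp v)) (Stab a)"
      by (rule lam_finprod[OF iuG finite_Stab])
    then show ?thesis by (simp add: Sg_def)
  qed
  have "Sg = finprod BB (\<lambda>v. pp u) (Stab a) \<otimes>\<^bsub>BB\<^esub> finprod BB (\<lambda>v. lam (iv u) (pp v)) (Stab a)"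
    using HOL.trans[OF HOL.trans[OF e1 e2] e3] .
  then have "Sg = (pp u) [^]\<^bsub>BB\<^esub> h \<otimes>\<^bsub>BB\<^esub> lam (iv u) Sg" by (simp only: e4 e5)
  then show ?thesis by (simp only: mult_BB)
qed

lemma w_eq:
  assumes u: "u \<in> Stab a"
  shows "w = add (pp u) (lam (iv u) w)"
proof -
  have uG: "u \<in> GG" using u Stab_sub by auto
  have iuG: "iv u \<in> GG" using GG_inv[OF uG] .
  have ppu: "pp u \<in> GG" using pp_GG[OF uG] .
  have ppP: "(pp u) [^]\<^bsub>BB\<^esub> n = id" using pp_P[OF uG] by (simp add: P_def)
  have "w = (add ((pp u) [^]\<^bsub>BB\<^esub> h) (lam (iv u) Sg)) [^]\<^bsub>BB\<^esub> ga"
    using Sg_eq[OF u] by (simp add: w_def)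
  also have "\<dots> = add (((pp u) [^]\<^bsub>BB\<^esub> h) [^]\<^bsub>BB\<^esub> ga) ((lam (iv u) Sg) [^]\<^bsub>BB\<^esub> ga)"
    using pow_add[OF pow_closed[OF ppu] lam_GG] .
  also have "((pp u) [^]\<^bsub>BB\<^esub> h) [^]\<^bsub>BB\<^esub> ga = (pp u) [^]\<^bsub>BB\<^esub> (n * de + 1)"
    using pow_pow[OF ppu] gd by simp
  also have "\<dots> = add (((pp u) [^]\<^bsub>BB\<^esub> n) [^]\<^bsub>BB\<^esub> de) ((pp u) [^]\<^bsub>BB\<^esub> (1::nat))"
    using pow_mult[OF ppu, of "n * de" 1] pow_pow[OF ppu, of n de] by simp
  also have "\<dots> = pp u" using ppP ppu by simp
  also have "(lam (iv u) Sg) [^]\<^bsub>BB\<^esub> ga = lam (iv u) w"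
    using lam_pow[OF iuG Sg_GG] by (simp add: w_def)
  finally show ?thesis .
qed

lemma conj:
  assumes u: "u \<in> Stab a"
  shows "w \<circ> u = lam w (qq u) \<circ> w"
proof -
  have uG: "u \<in> GG" using u Stab_sub by auto
  have iuG: "iv u \<in> GG" using GG_inv[OF uG] .
  have "w \<circ> u = add u (lam (iv u) w)" by (rule comp_as_add[OF uG w_GG])
  also have "\<dots> = add (add (qq u) (pp u)) (lam (iv u) w)" using decomp[OF uG] by simp
  also have "\<dots> = add (qq u) (add (pp u) (lam (iv u) w))"
    using add_assoc qq_GG[OF uG] pp_GG[OF uG] lam_GG by simp
  also have "\<dots> = add (qq u) w" using w_eq[OF u] by simp
  also have "\<dots> = add w (qq u)" by (rule add_comm)
  also have "\<dots> = lam w (qq u) \<circ> w" by (rule brace[OF w_GG qq_GG[OF uG]])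
  finally show ?thesis .
qed

end



context CSF2
begin

interpretation B: comm_group BB by (rule BB_cg)

definition "cj u = w \<circ> u \<circ> iv w"
definition "b = w a"

lemma bX: "b \<in> X" using GG_in[OF w_GG aX] by (simp add: b_def)

lemma w_iv: "w (iv w y) = y" using GG_f_iv[OF w_GG] .

lemma cj_eq: "u \<in> Stab a \<Longrightarrow> cj u = lam w (qq u)"
proof
  fix y assume u: "u \<in> Stab a"
  have "(w \<circ> u) (iv w y) = (lam w (qq u) \<circ> w) (iv w y)" using conj[OF u] by simp
  then show "cj u y = lam w (qq u) y" by (simp add: cj_def w_iv)
qed

lemma cj_Q: "u \<in> Stab a \<Longrightarrow> cj u \<in> Q"
  using cj_eq lam_Q[OF w_GG qq_Q] Stab_sub by auto

lemma cj_Stab: "u \<in> Stab a \<Longrightarrow> cj u \<in> Stab b"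
proof -
  assume u: "u \<in> Stab a"
  have uG: "u \<in> GG" using u Stab_sub by auto
  have "cj u \<in> GG" unfolding cj_def using GG_comp[OF GG_comp[OF w_GG uG] GG_inv[OF w_GG]] .
  moreover have "cj u b = b" using u GG_iv_f[OF w_GG] by (simp add: cj_def b_def Stab_def)
  ultimately show ?thesis by (simp add: Stab_def)
qed

lemma cj_inj: "inj_on cj (Stab a)"
proof (rule inj_onI)
  fix u v assume "u \<in> Stab a" "v \<in> Stab a" and e: "cj u = cj v"
  show "u = v"
  proof
    fix y
    have "cj u (w y) = cj v (w y)" using e by simp
    then have "w (u y) = w (v y)" using GG_iv_f[OF w_GG] by (simp add: cj_def)
    then show "u y = v y" using GG_inj[OF w_GG] by blast
  qed
qed

lemma card_Stab_b: "card (Stab b) = h"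
proof -
  have "card X * card (Stab b) = card X * h" by (metis orbit_stab[OF bX] N n_def)
  moreover have "card X > 0" using n_pos by (simp add: n_def)
  ultimately show ?thesis by simp
qed

lemma Stab_b_Q: "Stab b = Q"
proof -
  let ?A = "cj ` Stab a"
  have cA: "card ?A = h" using card_image[OF cj_inj] by (simp add: h_def)
  have AQ: "?A \<subseteq> Q" using cj_Q by auto
  have AS: "?A \<subseteq> Stab b" using cj_Stab by auto
  have "card ?A \<le> card Q" using card_mono[OF finite_Q AQ] .
  then have "card ?A = card Q" using card_Q_le cA by simp
  then have A1: "?A = Q" using card_subset_eq[OF finite_Q AQ] by simp
  have "?A = Stab b" using card_subset_eq[OF finite_Stab AS] cA card_Stab_b by simp
  then show ?thesis using A1 by simp
qed

lemma contradiction: False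
proof -
  define u0 where "u0 = cj g0"
  have g0S: "g0 \<in> Stab a" using g0G g0a by (simp add: Stab_def)
  have u0S: "u0 \<in> Stab b" using cj_Stab[OF g0S] by (simp add: u0_def)
  have u0Q: "u0 \<in> Q" using u0S Stab_b_Q by simp
  have u0G: "u0 \<in> GG" using u0S Stab_sub by auto
  have u0b: "u0 b = b" using u0S by (simp add: Stab_def)
  have cjid: "cj id = id" using w_iv by (auto simp: cj_def fun_eq_iff)
  have u0n: "u0 \<noteq> id"
  proof
    assume "u0 = id"
    then have "cj g0 = cj id" using cjid by (simp add: u0_def)
    then have "g0 = id" using cj_inj g0S Stab_id by (metis inj_on_def)
    then show False using g0n by simp
  qed
  define sb where "sb = sigma X op b"
  have sbG: "sb \<in> GG" using GG_sigma[OF bX] by (simp add: sb_def)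
  have lsb: "lam u0 sb = sb" using lam_sigma[OF u0G bX] u0b by (simp add: sb_def)
  define k where "k = pp sb"
  have kG: "k \<in> GG" using pp_GG[OF sbG] by (simp add: k_def)
  have kP: "k \<in> P" using pp_P[OF sbG] by (simp add: k_def)
  have lk: "lam u0 k = k" using pp_lam[OF u0G sbG] lsb by (simp add: k_def)
  have e1: "add u0 k = k \<circ> u0" using brace[OF u0G kG] lk by simp
  have e2: "add k u0 = lam k u0 \<circ> k" using brace[OF kG u0G] .
  have e3: "k \<circ> u0 = lam k u0 \<circ> k" using e1 e2 add_comm by metis
  have lQ: "lam k u0 \<in> Stab b" using lam_Q[OF kG u0Q] Stab_b_Q by simp
  define y where "y = iv k b"
  have yX: "y \<in> X" using GG_in[OF GG_inv[OF kG] bX] by (simp add: y_def)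
  have ky: "k y = b" using GG_f_iv[OF kG] by (simp add: y_def)
  have "k (u0 y) = lam k u0 (k y)" using fun_cong[OF e3, of y] by simp
  also have "\<dots> = b" using ky lQ by (simp add: Stab_def)
  finally have "k (u0 y) = k y" using ky by simp
  then have u0y: "u0 y = y" using GG_inj[OF kG] by blast
  have "b = y" using fix1[OF u0G u0n bX yX u0b u0y] .
  then have "k b = b" using ky by simp
  then have "k \<in> Stab b" using kG by (simp add: Stab_def)
  then have "k \<in> Q" using Stab_b_Q by simp
  then have k1: "k = id" using PQ kP by simp
  have "sb = add (qq sb) k" using decomp[OF sbG] by (simp add: k_def)
  then have "sb = qq sb" using k1 qq_GG[OF sbG] by simp
  then have sbQ: "sb \<in> Q" using qq_Q[OF sbG] by simp
  have allfix: "sigma X op x b = b" if x: "x \<in> X" for x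
  proof -
    obtain g where g: "g \<in> GG" "g b = x" using trans[OF bX x] by blast
    have "sigma X op x = lam g sb" using lam_sigma[OF g(1) bX] g(2) by (simp add: sb_def)
    then have "sigma X op x \<in> Q" using lam_Q[OF g(1) sbQ] by simp
    then have "sigma X op x \<in> Stab b" using Stab_b_Q by simp
    then show ?thesis by (simp add: Stab_def)
  qed
  have GGfix: "g b = b" if g: "g \<in> GG" for g
    using g unfolding perm_group_cs_def
  proof (induction rule: gen_perm_group.induct)
    case gen_id
    then show ?case by simp
  next
    case (gen_gen s')
    then show ?case using allfix by auto
  next
    case (gen_comp g h)
    then show ?case by simp
  next
    case (gen_inv g)
    then have "g \<in> GG" by (simp add: perm_group_cs_def)
    then show ?case using gen_inv.IH GG_iv_f by metis
  qed
  have Xb: "x = b" if x: "x \<in> X" for x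
  proof -
    obtain g where g: "g \<in> GG" "g b = x" using trans[OF bX x] by blast
    then show ?thesis using GGfix[OF g(1)] by simp
  qed
  have "g0 = id"
  proof
    fix y show "g0 y = id y"
    proof (cases "y \<in> X")
      case True
      then show ?thesis using Xb GGfix[OF g0G] by simp
    next
      case False
      then show ?thesis using GG_out[OF g0G] by simp
    qed
  qed
  then show False using g0n by simp
qed

end

theorem theorem1:
  fixes X :: "'a set" and op :: "'a \<Rightarrow> 'a \<Rightarrow> 'a"
  assumes "finite X" and "cycle_set X op"
  shows "\<not> frobenius_action (perm_group_cs X op) X"
proof
  assume fr: "frobenius_action (perm_group_cs X op) X"
  interpret CSF X op by (unfold_locales) (use assms fr in auto)
  obtain g0 a where "g0 \<in> perm_group_cs X op" "g0 \<noteq> id" "a \<in> X" "g0 a = a"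
    using witness by blast
  then interpret CSF2 X op a g0 by (unfold_locales) auto
  show False by (rule contradiction)
qed


end
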